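(* Let $x_j$ be a real random variable and $\boldsymbol{x}_C$ a random vector independent of $x_j$. If $f(x_j,\boldsymbol{x}_C)=g_1(x_j)h_1(\boldsymbol{x}_C)+\cdots+g_k(x_j)h_k(\boldsymbol{x}_C)$, where $g_1,\dots,g_k$ are functions of $x_j$ only and $h_1,\dots,h_k$ are functions of $\boldsymbol{x}_C$ only, then $$\mathbb{E}_{\boldsymbol{x}_C}\big[I_{ice}(x_j;\boldsymbol{x}_C)\big]\ge I_{pdp}(x_j).$$
   Context: Inputs are $\boldsymbol{x}=(x_1,\dots,x_m)$ with independent components; $C=\{1,\dots,m\}\setminus\{j\}$ and $\boldsymbol{x}_C$ denotes the vector of the inputs with indices in $C$. $\mathbb{E}_{z}$ and $\mathbb{V}_{z}$ denote expectation and variance taken with respect to the random variable $z$ only, the other arguments being held fixed. For a fixed value of $\boldsymbol{x}_C$, the ICE importance is $I_{ice}(x_j;\boldsymbol{x}_C)=\sqrt{\mathbb{V}_{x_j}[f(x_j,\boldsymbol{x}_C)]}$. The PDP importance is $I_{pdp}(x_j)=\sqrt{\mathbb{V}_{x_j}\big[\mathbb{E}_{\boldsymbol{x}_C}[f(x_j,\boldsymbol{x}_C)]\big]}$. All expectations, variances and covariances involved are assumed to exist and be finite. *)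

theory Defs
  imports "HOL-Probability.Probability"
begin

text \<open>Mj is the distribution of the real input x_j, MC the distribution of the
  vector x_C of the remaining inputs (values in an arbitrary measurable space).
  Independence of x_j and x_C means their joint law is the product Mj x MC,
  so all quantities below are expressed through the two marginals.\<close>

definition ice_imp :: "real measure \<Rightarrow> (real \<Rightarrow> 'c \<Rightarrow> real) \<Rightarrow> 'c \<Rightarrow> real" where
  "ice_imp Mj f c = sqrt (prob_space.variance Mj (\<lambda>x. f x c))"

definition pdp_imp :: "real measure \<Rightarrow> 'c measure \<Rightarrow> (real \<Rightarrow> 'c \<Rightarrow> real) \<Rightarrow> real" where
  "pdp_imp Mj MC f = sqrt (prob_space.variance Mj (\<lambda>x. prob_space.expectation MC (\<lambda>c. f x c)))"

end

theory Submission
  imports Defs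
begin

lemma disc_le:
  fixes A B C :: real
  assumes h: "\<And>t. 0 \<le> A*t^2 + 2*B*t + C" and A: "0 \<le> A"
  shows "B^2 \<le> A*C"
proof (cases "A = 0")
  case True
  have "B = 0"
  proof (rule ccontr)
    assume "B \<noteq> 0"
    with h[of "-(C+1)/(2*B)"] True show False by (simp add: field_simps)
  qed
  then show ?thesis using True by simp
next
  case False
  with A have Ap: "A > 0" by simp
  from h[of "-B/A"] have "0 \<le> A*(B/A)^2 - 2*B*B/A + C" by simp
  also have "A*(B/A)^2 = B^2/A" using Ap by (simp add: power2_eq_square)
  finally have "0 \<le> (C*A - B^2)/A" using Ap by (simp add: field_simps power2_eq_square)
  then have "0 \<le> C*A - B^2" using Ap by (simp add: zero_le_divide_iff)
  then show ?thesis by (simp add: mult.commute)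
qed

definition Bf :: "(nat \<Rightarrow> nat \<Rightarrow> real) \<Rightarrow> nat \<Rightarrow> (nat \<Rightarrow> real) \<Rightarrow> (nat \<Rightarrow> real) \<Rightarrow> real" where
  "Bf S k u v = (\<Sum>i<k. \<Sum>j<k. u i * v j * S i j)"

lemma Bf_sym:
  assumes "\<And>i j. S i j = S j i"
  shows "Bf S k u v = Bf S k v u"
  unfolding Bf_def
  by (subst sum.swap) (simp add: assms mult.commute mult.left_commute)

lemma Bf_expand:
  assumes "\<And>i j. S i j = S j i"
  shows "Bf S k (\<lambda>i. u i + t * v i) (\<lambda>i. u i + t * v i)
         = Bf S k v v * t^2 + 2 * Bf S k u v * t + Bf S k u u"
proof -
  have "Bf S k (\<lambda>i. u i + t * v i) (\<lambda>i. u i + t * v i)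
      = Bf S k u u + t * Bf S k u v + t * Bf S k v u + t^2 * Bf S k v v"
    unfolding Bf_def
    by (simp add: algebra_simps sum.distrib sum_distrib_left power2_eq_square)
  then show ?thesis using Bf_sym[of S k v u, OF assms] by (simp add: algebra_simps)
qed

lemma Bf_CS:
  assumes "\<And>i j. S i j = S j i" and psd: "\<And>w. 0 \<le> Bf S k w w"
  shows "Bf S k u v \<le> sqrt (Bf S k u u) * sqrt (Bf S k v v)"
proof -
  have "(Bf S k u v)^2 \<le> Bf S k v v * Bf S k u u"
  proof (rule disc_le)
    fix t
    show "0 \<le> Bf S k v v * t^2 + 2 * Bf S k u v * t + Bf S k u u"
      using psd[of "\<lambda>i. u i + t * v i"] Bf_expand[of S k u t v, OF assms(1)] by simp
    show "0 \<le> Bf S k v v" by (rule psd)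
  qed
  then have "sqrt ((Bf S k u v)^2) \<le> sqrt (Bf S k u u * Bf S k v v)"
    by (intro real_sqrt_le_mono) (simp add: mult.commute)
  then have "Bf S k u v \<le> sqrt (Bf S k u u * Bf S k v v)"
    by (metis real_sqrt_abs abs_ge_self order_trans)
  then show ?thesis by (simp add: real_sqrt_mult)
qed

lemma Bf_bound:
  assumes psd: "\<And>w. 0 \<le> Bf S k w w"
  shows "sqrt (Bf S k u u) \<le> (\<Sum>i<k. \<bar>u i\<bar>) * sqrt (\<Sum>i<k. \<Sum>j<k. \<bar>S i j\<bar>)"
proof -
  let ?s = "\<Sum>i<k. \<bar>u i\<bar>"
  have ui: "\<bar>u i\<bar> \<le> ?s" if "i < k" for i
    using that by (intro member_le_sum) auto
  have "Bf S k u u \<le> (\<Sum>i<k. \<Sum>j<k. \<bar>u i\<bar> * \<bar>u j\<bar> * \<bar>S i j\<bar>)"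
    unfolding Bf_def
    by (intro sum_mono) (simp add: abs_mult[symmetric])
  also have "\<dots> \<le> (\<Sum>i<k. \<Sum>j<k. ?s * ?s * \<bar>S i j\<bar>)"
    by (intro sum_mono mult_right_mono mult_mono ui) auto
  also have "\<dots> = ?s^2 * (\<Sum>i<k. \<Sum>j<k. \<bar>S i j\<bar>)"
    by (simp add: sum_distrib_left power2_eq_square)
  finally have "sqrt (Bf S k u u) \<le> sqrt (?s^2 * (\<Sum>i<k. \<Sum>j<k. \<bar>S i j\<bar>))"
    by (rule real_sqrt_le_mono)
  also have "\<dots> = ?s * sqrt (\<Sum>i<k. \<Sum>j<k. \<bar>S i j\<bar>)"
    by (simp add: real_sqrt_mult sum_nonneg)
  finally show ?thesis .
qed

theorem theorem3:
  fixes Mj :: "real measure" and MC :: "'c measure"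
    and f :: "real \<Rightarrow> 'c \<Rightarrow> real"
    and g :: "nat \<Rightarrow> real \<Rightarrow> real" and h :: "nat \<Rightarrow> 'c \<Rightarrow> real" and k :: nat
  assumes "prob_space Mj" and "prob_space MC"
    and "\<And>i. i < k \<Longrightarrow> g i \<in> borel_measurable Mj"
    and "\<And>i. i < k \<Longrightarrow> integrable Mj (g i)"
    and "\<And>i. i < k \<Longrightarrow> integrable Mj (\<lambda>x. (g i x)\<^sup>2)"
    and "\<And>i. i < k \<Longrightarrow> h i \<in> borel_measurable MC"
    and "\<And>i. i < k \<Longrightarrow> integrable MC (h i)"
    and "f = (\<lambda>x c. \<Sum>i<k. g i x * h i c)"
  shows "prob_space.expectation MC (\<lambda>c. ice_imp Mj f c) \<ge> pdp_imp Mj MC f"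
proof -
  interpret J: prob_space Mj by fact
  interpret C: prob_space MC by fact
  define m where "m i = J.expectation (g i)" for i
  define G where "G i x = g i x - m i" for i x
  have Gm: "G i \<in> borel_measurable Mj" if "i < k" for i
    unfolding G_def using assms(3)[OF that] by measurable
  have intG2: "integrable Mj (\<lambda>x. (G i x)^2)" if "i < k" for i
    unfolding G_def power2_diff
    using assms(4,5)[OF that]
    by (intro Bochner_Integration.integrable_diff Bochner_Integration.integrable_add
          integrable_mult_right integrable_mult_left) auto
  have intGG: "integrable Mj (\<lambda>x. G i x * G j x)" if "i < k" "j < k" for i j
  proof (rule Bochner_Integration.integrable_bound)
    show "integrable Mj (\<lambda>x. (G i x)^2 + (G j x)^2)"
      using intG2 that by auto
    show "(\<lambda>x. G i x * G j x) \<in> borel_measurable Mj"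
      using Gm that by measurable
    show "AE x in Mj. norm (G i x * G j x) \<le> norm ((G i x)^2 + (G j x)^2)"
    proof (intro AE_I2)
      fix x
      have a: "0 \<le> (\<bar>G i x\<bar> - \<bar>G j x\<bar>)^2" by simp
      have b: "0 \<le> \<bar>G i x\<bar> * \<bar>G j x\<bar>" by simp
      have c: "(\<bar>G i x\<bar> - \<bar>G j x\<bar>)^2 = (G i x)^2 + (G j x)^2 - 2 * (\<bar>G i x\<bar> * \<bar>G j x\<bar>)"
        by (simp add: power2_eq_square algebra_simps)
      have d: "\<bar>G i x\<bar> * \<bar>G j x\<bar> \<le> (G i x)^2 + (G j x)^2" using a b c by linarith
      have e: "norm (G i x * G j x) = \<bar>G i x\<bar> * \<bar>G j x\<bar>" by (simp add: abs_mult)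
      have f: "norm ((G i x)^2 + (G j x)^2) = (G i x)^2 + (G j x)^2" by simp
      show "norm (G i x * G j x) \<le> norm ((G i x)^2 + (G j x)^2)" unfolding e f by (rule d)
    qed
  qed
  define S where "S i j = J.expectation (\<lambda>x. G i x * G j x)" for i j
  have Ssym: "S i j = S j i" for i j unfolding S_def by (simp add: mult.commute)
  have varlin: "J.variance (\<lambda>x. \<Sum>i<k. v i * g i x) = Bf S k v v" for v
  proof -
    have e: "J.expectation (\<lambda>x. \<Sum>i<k. v i * g i x) = (\<Sum>i<k. v i * m i)"
      unfolding m_def using assms(4)
      by (subst Bochner_Integration.integral_sum) auto
    have d: "(\<Sum>i<k. v i * g i x) - (\<Sum>i<k. v i * m i) = (\<Sum>i<k. v i * G i x)" for x
      unfolding G_def by (simp add: sum_subtractf right_diff_distrib)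
    have sq: "(\<Sum>i<k. v i * G i x)^2 = (\<Sum>i<k. \<Sum>j<k. v i * v j * (G i x * G j x))" for x
      by (simp add: power2_eq_square sum_product algebra_simps)
    have "J.variance (\<lambda>x. \<Sum>i<k. v i * g i x)
        = J.expectation (\<lambda>x. \<Sum>i<k. \<Sum>j<k. v i * v j * (G i x * G j x))"
      unfolding e d sq ..
    also have "\<dots> = (\<Sum>i<k. J.expectation (\<lambda>x. \<Sum>j<k. v i * v j * (G i x * G j x)))"
      by (rule Bochner_Integration.integral_sum)
         (auto intro!: Bochner_Integration.integrable_sum integrable_mult_right intGG)
    also have "\<dots> = (\<Sum>i<k. \<Sum>j<k. v i * v j * S i j)"
    proof (rule sum.cong[OF refl])
      fix i assume "i \<in> {..<k}"
      then show "J.expectation (\<lambda>x. \<Sum>j<k. v i * v j * (G i x * G j x)) = (\<Sum>j<k. v i * v j * S i j)"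
        unfolding S_def
        by (subst Bochner_Integration.integral_sum) (auto intro!: integrable_mult_right intGG)
    qed
    finally show ?thesis unfolding Bf_def .
  qed
  have psd: "0 \<le> Bf S k w w" for w
    unfolding varlin[symmetric] by (intro Bochner_Integration.integral_nonneg) auto
  define a where "a i = C.expectation (h i)" for i
  have ice: "ice_imp Mj f c = sqrt (Bf S k (\<lambda>i. h i c) (\<lambda>i. h i c))" for c
    unfolding ice_imp_def assms(8) varlin[symmetric] by (simp add: mult.commute)
  have pdp: "pdp_imp Mj MC f = sqrt (Bf S k a a)"
  proof -
    have "C.expectation (\<lambda>c. f x c) = (\<Sum>i<k. a i * g i x)" for x
      unfolding assms(8) a_def using assms(7)
      by (subst Bochner_Integration.integral_sum) (auto simp: mult.commute)
    then show ?thesis unfolding pdp_imp_def varlin[symmetric] by simp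
  qed
  define T where "T = sqrt (\<Sum>i<k. \<Sum>j<k. \<bar>S i j\<bar>)"
  have intsq: "integrable MC (\<lambda>c. sqrt (Bf S k (\<lambda>i. h i c) (\<lambda>i. h i c)))"
  proof (rule Bochner_Integration.integrable_bound)
    show "integrable MC (\<lambda>c. (\<Sum>i<k. \<bar>h i c\<bar>) * T)"
      using assms(7) by (intro integrable_mult_left Bochner_Integration.integrable_sum integrable_abs) auto
    show "(\<lambda>c. sqrt (Bf S k (\<lambda>i. h i c) (\<lambda>i. h i c))) \<in> borel_measurable MC"
      unfolding Bf_def using assms(6) by measurable
    show "AE c in MC. norm (sqrt (Bf S k (\<lambda>i. h i c) (\<lambda>i. h i c))) \<le> norm ((\<Sum>i<k. \<bar>h i c\<bar>) * T)"
    proof (intro AE_I2)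
      fix c
      have "0 \<le> Bf S k (\<lambda>i. h i c) (\<lambda>i. h i c)" by (rule psd)
      moreover have "0 \<le> T" unfolding T_def by (simp add: sum_nonneg)
      moreover have "sqrt (Bf S k (\<lambda>i. h i c) (\<lambda>i. h i c)) \<le> (\<Sum>i<k. \<bar>h i c\<bar>) * T"
        unfolding T_def by (rule Bf_bound[OF psd])
      ultimately show "norm (sqrt (Bf S k (\<lambda>i. h i c) (\<lambda>i. h i c))) \<le> norm ((\<Sum>i<k. \<bar>h i c\<bar>) * T)"
        by (simp add: abs_mult sum_nonneg)
    qed
  qed
  have intB: "integrable MC (\<lambda>c. Bf S k (\<lambda>i. h i c) a)"
    unfolding Bf_def using assms(7)
    by (intro Bochner_Integration.integrable_sum integrable_mult_left) auto
  have EB: "C.expectation (\<lambda>c. Bf S k (\<lambda>i. h i c) a) = Bf S k a a"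
  proof -
    have "C.expectation (\<lambda>c. Bf S k (\<lambda>i. h i c) a)
        = (\<Sum>i<k. C.expectation (\<lambda>c. \<Sum>j<k. h i c * a j * S i j))"
      unfolding Bf_def
      by (rule Bochner_Integration.integral_sum)
         (auto intro!: Bochner_Integration.integrable_sum integrable_mult_left assms(7))
    also have "\<dots> = (\<Sum>i<k. \<Sum>j<k. a i * a j * S i j)"
    proof (rule sum.cong[OF refl])
      fix i assume "i \<in> {..<k}"
      then show "C.expectation (\<lambda>c. \<Sum>j<k. h i c * a j * S i j) = (\<Sum>j<k. a i * a j * S i j)"
        unfolding a_def
        by (subst Bochner_Integration.integral_sum) (auto intro!: integrable_mult_left assms(7))
    qed
    finally show ?thesis unfolding Bf_def .
  qed
  let ?E = "C.expectation (\<lambda>c. sqrt (Bf S k (\<lambda>i. h i c) (\<lambda>i. h i c)))"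
  have "Bf S k a a = C.expectation (\<lambda>c. Bf S k (\<lambda>i. h i c) a)" using EB by simp
  also have "\<dots> \<le> C.expectation (\<lambda>c. sqrt (Bf S k (\<lambda>i. h i c) (\<lambda>i. h i c)) * sqrt (Bf S k a a))"
    by (intro integral_mono intB integrable_mult_left intsq Bf_CS[of S k, OF Ssym psd])
  also have "\<dots> = ?E * sqrt (Bf S k a a)" by simp
  finally have main: "sqrt (Bf S k a a) * sqrt (Bf S k a a) \<le> ?E * sqrt (Bf S k a a)"
    using psd by simp
  have E0: "0 \<le> ?E" by (intro Bochner_Integration.integral_nonneg) (auto intro: psd)
  have "sqrt (Bf S k a a) \<le> ?E"
  proof (cases "sqrt (Bf S k a a) = 0")
    case True then show ?thesis using E0 by simp
  next
    case False
    then have "sqrt (Bf S k a a) > 0" using psd[of a] by (simp add: order_le_less)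
    with main show ?thesis by (intro mult_right_le_imp_le[OF main]) simp
  qed
  then show ?thesis unfolding pdp ice by simp
qed

end
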